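(* Let $\mathcal B$ be a BMC with $\mathbf c^*_q<\infty$ for all $q\in\mathcal T$, and consider the Q-learning process with learning rates $\lambda_i\in[0,1]$ satisfying $\sum_{i=0}^\infty\lambda_i=\infty$ and a fixed selection distribution with $p_q\ge p_{\min}>0$ for all $q$. Then for every initial vector $Q_0\ge\mathbf 0$, $\lim_{i\to\infty}\mathbb E Q_i=\mathbf c^*$.
   Context: A branching Markov chain (BMC) is $\mathcal B=(\mathcal T,p,c)$ with $\mathcal T$ a finite set of types, $p(q)$ for each $q\in\mathcal T$ a probability distribution with finite support over finite lists $\mathcal T^*$ of types (the offspring distribution), and $c:\mathcal T\to\mathbb R_{>0}$ a strictly positive cost. For a list $\alpha$, $|\alpha|$ is its length and $\alpha_i$ its $i$-th element. $\mathbf c^*_q\in[0,\infty]$ denotes the expected total cost until extinction starting from the single entity $q$; equivalently $\mathbf c^*$ is the least fixed point in $[0,\infty]^{\mathcal T}$ of $F(\mathbf x)_q=c(q)+\sum_\alpha p(q)(\alpha)\sum_{i=1}^{|\alpha|}\mathbf x_{\alpha_i}$. Q-learning process for a BMC: given deterministic learning rates $\lambda_i\in[0,1]$, a probability distribution $(p_q)_{q\in\mathcal T}$ and an initial vector $Q_0\in\mathbb R_{\ge0}^{\mathcal T}$, at each step $i=0,1,2,\dots$ a type $q_i$ is selected with probability $p_{q_i}$ independently of all previous randomness, then a list $\beta^i$ is drawn from $p(q_i)$ independently, and $Q_{i+1}(q_i)=(1-\lambda_i)Q_i(q_i)+\lambda_i\big(c(q_i)+\sum_{j=1}^{|\beta^i|}Q_i(\beta^i_j)\big)$,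 while $Q_{i+1}(q)=Q_i(q)$ for $q\ne q_i$. $\mathbb E Q_i$ is the componentwise expectation. *)

theory Defs
  imports "HOL-Probability.Probability"
begin

text \<open>A branching Markov chain over a finite type of types 't:
  offspring distribution p :: 't => 't list pmf, cost c :: 't => real.\<close>

definition bmc :: "('t::finite \<Rightarrow> 't list pmf) \<Rightarrow> ('t \<Rightarrow> real) \<Rightarrow> bool" where
  "bmc p c \<longleftrightarrow> (\<forall>q. finite (set_pmf (p q))) \<and> (\<forall>q. c q > 0)"

definition bmc_F :: "('t \<Rightarrow> 't list pmf) \<Rightarrow> ('t \<Rightarrow> real) \<Rightarrow> ('t \<Rightarrow> ennreal) \<Rightarrow> ('t \<Rightarrow> ennreal)" where
  "bmc_F p c x = (\<lambda>q. ennreal (c q) + (\<integral>\<^sup>+ \<alpha>. (\<Sum>i<length \<alpha>. x (\<alpha> ! i)) \<partial>measure_pmf (p q)))"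

text \<open>Expected total cost until extinction: least fixed point of F.\<close>
definition cstar :: "('t \<Rightarrow> 't list pmf) \<Rightarrow> ('t \<Rightarrow> real) \<Rightarrow> ('t \<Rightarrow> ennreal)" where
  "cstar p c = lfp (bmc_F p c)"

text \<open>Distribution of the random vector Q_i of the Q-learning process
  (selection distribution P, learning rates lr, initial vector Q0).\<close>
fun qdist :: "('t \<Rightarrow> 't list pmf) \<Rightarrow> ('t \<Rightarrow> real) \<Rightarrow> 't pmf \<Rightarrow> (nat \<Rightarrow> real)
     \<Rightarrow> ('t \<Rightarrow> real) \<Rightarrow> nat \<Rightarrow> ('t \<Rightarrow> real) pmf" where
  "qdist p c P lr Q0 0 = return_pmf Q0"
| "qdist p c P lr Q0 (Suc i) =
     bind_pmf (qdist p c P lr Q0 i) (\<lambda>Q.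
       bind_pmf P (\<lambda>q.
         map_pmf (\<lambda>\<beta>. Q(q := (1 - lr i) * Q q + lr i * (c q + (\<Sum>j<length \<beta>. Q (\<beta> ! j)))))
           (p q)))"

definition EQ :: "('t \<Rightarrow> 't list pmf) \<Rightarrow> ('t \<Rightarrow> real) \<Rightarrow> 't pmf \<Rightarrow> (nat \<Rightarrow> real)
     \<Rightarrow> ('t \<Rightarrow> real) \<Rightarrow> nat \<Rightarrow> 't \<Rightarrow> real" where
  "EQ p c P lr Q0 i q = measure_pmf.expectation (qdist p c P lr Q0 i) (\<lambda>Q. Q q)"

end

theory Submission imports Defs begin

definition Mop :: "('t \<Rightarrow> 't list pmf) \<Rightarrow> ('t \<Rightarrow> real) \<Rightarrow> 't \<Rightarrow> real" where
  "Mop p x q = (\<Sum>\<alpha>\<in>set_pmf (p q). pmf (p q) \<alpha> * (\<Sum>j<length \<alpha>. x (\<alpha> ! j)))"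

lemma Mop_diff: "Mop p (\<lambda>r. x r - y r) q = Mop p x q - Mop p y q"
  unfolding Mop_def by (simp add: sum_subtractf right_diff_distrib)

lemma Mop_scale: "Mop p (\<lambda>r. a * x r) q = a * Mop p x q"
  unfolding Mop_def by (simp add: sum_distrib_left mult_ac)

lemma Mop_mono: "(\<And>r. x r \<le> y r) \<Longrightarrow> Mop p x q \<le> Mop p y q"
  unfolding Mop_def by (intro sum_mono mult_left_mono) auto

lemma Mop_abs: "\<bar>Mop p x q\<bar> \<le> Mop p (\<lambda>r. \<bar>x r\<bar>) q"
  unfolding Mop_def
  apply (rule order.trans[OF sum_abs])
  apply (intro sum_mono)
  apply (simp add: abs_mult)
  apply (intro mult_left_mono sum_abs) apply auto done

lemma Mop_sum: "Mop p (\<lambda>r. \<Sum>Q\<in>S. w Q * Q r) q = (\<Sum>Q\<in>S. w Q * Mop p Q q)"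
  unfolding Mop_def
  by (simp add: sum_distrib_left sum_distrib_right mult_ac sum.swap[of _ S])

lemma fin_qdist:
  assumes "\<forall>q. finite (set_pmf (p q))"
  shows "finite (set_pmf (qdist p c (P::'t::finite pmf) lr Q0 i))"
  by (induction i) (auto simp: set_bind_pmf assms)

lemma cs_fix:
  assumes "bmc p c" "\<forall>q. cstar p c q < \<infinity>"
  shows "enn2real (cstar p c q) = c q + Mop p (\<lambda>r. enn2real (cstar p c r)) q"
proof -
  let ?cs = "\<lambda>r. enn2real (cstar p c r)"
  have fin: "finite (set_pmf (p q))" using assms(1) by (simp add: bmc_def)
  have cpos: "c q > 0" using assms(1) by (simp add: bmc_def)
  have mono: "mono (bmc_F p c)"
    unfolding bmc_F_def mono_def le_fun_def
    by (auto intro!: add_left_mono nn_integral_mono sum_mono)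
  have eq: "\<And>r. cstar p c r = ennreal (?cs r)"
    using assms(2) by simp
  have "cstar p c q = bmc_F p c (cstar p c) q"
    unfolding cstar_def by (subst lfp_unfold[OF mono]) simp
  also have "\<dots> = ennreal (c q) + (\<Sum>\<alpha>\<in>set_pmf (p q). (\<Sum>i<length \<alpha>. ennreal (?cs (\<alpha> ! i))) * ennreal (pmf (p q) \<alpha>))"
    unfolding bmc_F_def by (subst nn_integral_measure_pmf_finite[OF fin]) (auto simp: eq[symmetric])
  also have "\<dots> = ennreal (c q + Mop p ?cs q)"
    unfolding Mop_def
    using cpos by (simp add: ennreal_mult[symmetric] sum_nonneg mult_ac)
  finally have h: "cstar p c q = ennreal (c q + Mop p ?cs q)" .
  moreover have "Mop p ?cs q \<ge> 0" unfolding Mop_def by (auto intro!: sum_nonneg mult_nonneg_nonneg)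
  ultimately show ?thesis using cpos h by simp
qed

lemma inner_exp:
  assumes fin: "\<forall>q. finite (set_pmf (p q))"
  shows "measure_pmf.expectation (bind_pmf (P::'t::finite pmf) (\<lambda>q'. map_pmf (\<lambda>\<beta>. Q(q' := (1 - l) * Q q' + l * (c q' + (\<Sum>j<length \<beta>. Q (\<beta> ! j))))) (p q')))
     (\<lambda>Q'. Q' q) = Q q + l * pmf P q * (c q + Mop p Q q - Q q)"
proof -
  have one: "(\<Sum>\<alpha>\<in>set_pmf (p q). pmf (p q) \<alpha>) = 1" using fin by (intro sum_pmf_eq_1) auto
  have oneP: "(\<Sum>q'\<in>UNIV. pmf P q') = 1" by (intro sum_pmf_eq_1) auto
  have e: "measure_pmf.expectation (map_pmf (\<lambda>\<beta>. Q(q' := (1 - l) * Q q' + l * (c q' + (\<Sum>j<length \<beta>. Q (\<beta> ! j))))) (p q')) (\<lambda>Q'. Q' q)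
     = Q q + (if q' = q then l * (c q + Mop p Q q - Q q) else 0)" for q'
  proof (cases "q' = q")
    case True
    have "measure_pmf.expectation (map_pmf (\<lambda>\<beta>. Q(q' := (1 - l) * Q q' + l * (c q' + (\<Sum>j<length \<beta>. Q (\<beta> ! j))))) (p q')) (\<lambda>Q'. Q' q)
       = (\<Sum>\<alpha>\<in>set_pmf (p q). pmf (p q) \<alpha> * ((1 - l) * Q q + l * (c q + (\<Sum>j<length \<alpha>. Q (\<alpha> ! j)))))"
      using True fin by (simp, subst integral_measure_pmf[of "set_pmf (p q)"]) auto
    also have "\<dots> = (1 - l) * Q q * (\<Sum>\<alpha>\<in>set_pmf (p q). pmf (p q) \<alpha>) + l * c q * (\<Sum>\<alpha>\<in>set_pmf (p q). pmf (p q) \<alpha>) + l * Mop p Q q"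
    proof -
      have "(\<Sum>\<alpha>\<in>set_pmf (p q). pmf (p q) \<alpha> * ((1 - l) * Q q + l * (c q + (\<Sum>j<length \<alpha>. Q (\<alpha> ! j)))))
        = (\<Sum>\<alpha>\<in>set_pmf (p q). (1 - l) * Q q * pmf (p q) \<alpha> + l * c q * pmf (p q) \<alpha> + l * (pmf (p q) \<alpha> * (\<Sum>j<length \<alpha>. Q (\<alpha> ! j))))"
        by (intro sum.cong refl) (simp add: algebra_simps)
      also have "\<dots> = (1 - l) * Q q * (\<Sum>\<alpha>\<in>set_pmf (p q). pmf (p q) \<alpha>) + l * c q * (\<Sum>\<alpha>\<in>set_pmf (p q). pmf (p q) \<alpha>) + l * Mop p Q q"
        unfolding Mop_def by (simp add: sum.distrib sum_distrib_left)
      finally show ?thesis .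
    qed
    also have "\<dots> = Q q + l * (c q + Mop p Q q - Q q)" using one by (simp add: algebra_simps)
    finally show ?thesis using True by simp
  next
    case False
    then show ?thesis by simp
  qed
  have "measure_pmf.expectation (bind_pmf P (\<lambda>q'. map_pmf (\<lambda>\<beta>. Q(q' := (1 - l) * Q q' + l * (c q' + (\<Sum>j<length \<beta>. Q (\<beta> ! j))))) (p q')))
     (\<lambda>Q'. Q' q) = (\<Sum>q'\<in>UNIV. pmf P q' *\<^sub>R measure_pmf.expectation (map_pmf (\<lambda>\<beta>. Q(q' := (1 - l) * Q q' + l * (c q' + (\<Sum>j<length \<beta>. Q (\<beta> ! j))))) (p q')) (\<lambda>Q'. Q' q))"
    by (rule pmf_expectation_bind) (auto simp: fin)
  also have "\<dots> = (\<Sum>q'\<in>UNIV. pmf P q' * Q q + (if q' = q then pmf P q * (l * (c q + Mop p Q q - Q q)) else 0))"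
    apply (rule sum.cong[OF refl])
    apply (subst e)
    apply (simp add: algebra_simps)
    done
  also have "\<dots> = Q q + l * pmf P q * (c q + Mop p Q q - Q q)"
    by (simp add: sum.distrib sum_distrib_right[symmetric] oneP)
  finally show ?thesis .
qed

lemma EQ_step:
  assumes fin: "\<forall>q. finite (set_pmf (p q))"
  shows "EQ p c (P::'t::finite pmf) lr Q0 (Suc i) q = EQ p c P lr Q0 i q + lr i * pmf P q * (c q + Mop p (EQ p c P lr Q0 i) q - EQ p c P lr Q0 i q)"
proof -
  define X where "X = qdist p c P lr Q0 i"
  have finX: "finite (set_pmf X)" unfolding X_def by (rule fin_qdist[OF fin])
  have EQi: "EQ p c P lr Q0 i r = (\<Sum>Q\<in>set_pmf X. pmf X Q * Q r)" for r
    unfolding EQ_def X_def[symmetric] by (subst integral_measure_pmf[of "set_pmf X"]) (auto simp: finX)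
  have EQf: "EQ p c P lr Q0 i = (\<lambda>r. \<Sum>Q\<in>set_pmf X. pmf X Q * Q r)" using EQi by auto
  have oneX: "(\<Sum>Q\<in>set_pmf X. pmf X Q) = 1" using finX by (intro sum_pmf_eq_1) auto
  have "EQ p c P lr Q0 (Suc i) q = (\<Sum>Q\<in>set_pmf X. pmf X Q *\<^sub>R (Q q + lr i * pmf P q * (c q + Mop p Q q - Q q)))"
    unfolding EQ_def qdist.simps X_def[symmetric]
    by (subst pmf_expectation_bind[of "set_pmf X"]) (auto simp: finX fin inner_exp set_bind_pmf intro!: finite_UN_I)
  also have "\<dots> = (\<Sum>Q\<in>set_pmf X. pmf X Q * Q q) + lr i * pmf P q * (c q * (\<Sum>Q\<in>set_pmf X. pmf X Q) + (\<Sum>Q\<in>set_pmf X. pmf X Q * Mop p Q q) - (\<Sum>Q\<in>set_pmf X. pmf X Q * Q q))"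
    by (simp add: sum.distrib sum_distrib_left sum_distrib_right sum_subtractf algebra_simps)
  also have "\<dots> = EQ p c P lr Q0 i q + lr i * pmf P q * (c q + Mop p (EQ p c P lr Q0 i) q - EQ p c P lr Q0 i q)"
    by (simp add: EQf oneX Mop_sum)
  finally show ?thesis .
qed

lemma partial_sums_at_top:
  fixes f :: "nat \<Rightarrow> real"
  assumes nn: "\<forall>i. 0 \<le> f i" and ns: "\<not> summable f"
  shows "filterlim (\<lambda>n. \<Sum>k<n. f k) at_top sequentially"
  unfolding filterlim_at_top
proof
  fix Z
  obtain n where n: "Z < (\<Sum>k<n. f k)"
  proof (rule ccontr)
    assume "\<not> thesis"
    then have "\<forall>n. (\<Sum>k<n. f k) \<le> Z" using that by (meson not_le)
    then have "summable f" using nn by (intro summableI_nonneg_bounded[where x=Z]) auto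
    with ns show False by simp
  qed
  show "\<forall>\<^sub>F x in sequentially. Z \<le> (\<Sum>k<x. f k)"
  proof (rule eventually_sequentiallyI[of n])
    fix m assume "n \<le> m"
    then have "(\<Sum>k<n. f k) \<le> (\<Sum>k<m. f k)" using nn by (intro sum_mono2) auto
    with n show "Z \<le> (\<Sum>k<m. f k)" by simp
  qed
qed

lemma prod_exp_bound:
  fixes f :: "nat \<Rightarrow> real"
  assumes "\<forall>i. 0 \<le> a * f i \<and> a * f i \<le> 1"
  shows "(\<Prod>k<n. (1 - a * f k)) \<le> exp (- (a * (\<Sum>k<n. f k)))"
proof (induction n)
  case 0
  then show ?case by simp
next
  case (Suc n)
  have "(\<Prod>k<Suc n. (1 - a * f k)) = (\<Prod>k<n. (1 - a * f k)) * (1 - a * f n)" by simp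
  also have "\<dots> \<le> exp (- (a * (\<Sum>k<n. f k))) * exp (- (a * f n))"
  proof (rule mult_mono[OF Suc.IH])
    show "1 - a * f n \<le> exp (- (a * f n))" using exp_ge_add_one_self[of "- (a * f n)"] by simp
    show "0 \<le> exp (- (a * (\<Sum>k<n. f k)))" by simp
    show "0 \<le> 1 - a * f n" using assms by simp
  qed
  also have "\<dots> = exp (- (a * (\<Sum>k<Suc n. f k)))" by (simp add: exp_add[symmetric] algebra_simps)
  finally show ?case .
qed

lemma exp_neg_to_zero:
  fixes S :: "nat \<Rightarrow> real"
  assumes "a > 0" "filterlim S at_top sequentially"
  shows "(\<lambda>n. exp (- (a * S n))) \<longlonglongrightarrow> 0"
proof -
  have "filterlim (\<lambda>n. a * S n) at_top sequentially"
    using filterlim_tendsto_pos_mult_at_top[OF tendsto_const assms(1) assms(2)] .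
  then have "filterlim (\<lambda>n. - (a * S n)) at_bot sequentially"
    by (simp add: filterlim_uminus_at_top)
  then show ?thesis by (rule filterlim_compose[OF exp_at_bot])
qed

theorem theorem4:
  fixes p :: "'t::finite \<Rightarrow> 't list pmf" and c :: "'t \<Rightarrow> real"
    and P :: "'t pmf" and lr :: "nat \<Rightarrow> real" and pmin :: real and Q0 :: "'t \<Rightarrow> real"
  assumes "bmc p c"
    and "\<forall>q. cstar p c q < \<infinity>"
    and "\<forall>i. 0 \<le> lr i \<and> lr i \<le> 1"
    and "\<not> summable lr"
    and "pmin > 0" and "\<forall>q. pmf P q \<ge> pmin"
    and "\<forall>q. Q0 q \<ge> 0"
  shows "\<forall>q. (\<lambda>i. EQ p c P lr Q0 i q) \<longlonglongrightarrow> enn2real (cstar p c q)"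
proof -
  note bmc = assms(1) and fint = assms(2) and lr = assms(3) and ns = assms(4)
    and pminpos = assms(5) and pminle = assms(6)
  have fin: "\<forall>q. finite (set_pmf (p q))" using bmc by (simp add: bmc_def)
  have cpos: "\<And>q. c q > 0" using bmc by (simp add: bmc_def)
  define cs where "cs = (\<lambda>r. enn2real (cstar p c r))"
  have fixp: "\<And>q. cs q = c q + Mop p cs q"
    unfolding cs_def by (rule cs_fix[OF bmc fint])
  have Mcs: "\<And>q. Mop p cs q \<ge> 0"
    unfolding Mop_def cs_def by (auto intro!: sum_nonneg mult_nonneg_nonneg)
  have cspos: "\<And>q. cs q > 0" using fixp cpos Mcs by (metis add_pos_nonneg)
  have csge: "\<And>q. c q \<le> cs q" using fixp Mcs by (metis le_add_same_cancel1)
  define \<delta> where "\<delta> = Min (range (\<lambda>q. c q / cs q))"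
  have \<delta>pos: "\<delta> > 0" unfolding \<delta>_def using cpos cspos by (subst Min_gr_iff) auto
  have \<delta>le: "\<And>q. \<delta> \<le> c q / cs q" unfolding \<delta>_def by (rule Min_le) auto
  have \<delta>c: "\<And>q. \<delta> * cs q \<le> c q" using \<delta>le cspos by (simp add: pos_le_divide_eq)
  have \<delta>1: "\<delta> \<le> 1" using \<delta>le[of undefined] csge[of undefined] cspos[of undefined]
    by (meson divide_le_eq_1 order_trans)
  have P1: "\<And>q. pmf P q \<le> 1" by (rule pmf_le_1)
  define a where "a = pmin * \<delta>"
  have apos: "a > 0" unfolding a_def using pminpos \<delta>pos by simp
  have pmin1: "pmin \<le> 1" using pminle P1 by (meson order_trans)
  have a1: "a \<le> 1" unfolding a_def using pmin1 \<delta>1 pminpos \<delta>pos by (simp add: mult_le_one)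
  have alr: "\<forall>i. 0 \<le> a * lr i \<and> a * lr i \<le> 1"
    using lr apos a1 by (simp add: mult_le_one)
  define e where "e i q = EQ p c P lr Q0 i q - cs q" for i q
  define r0 where "r0 = (\<Sum>q\<in>UNIV. \<bar>e 0 q\<bar> / cs q)"
  define R where "R i = r0 * (\<Prod>k<i. (1 - a * lr k))" for i
  have r0nn: "r0 \<ge> 0" unfolding r0_def by (intro sum_nonneg divide_nonneg_pos) (auto simp: cspos)
  have Rnn: "\<And>i. R i \<ge> 0" unfolding R_def using r0nn alr by (auto intro!: prod_nonneg mult_nonneg_nonneg)
  have estep: "e (Suc i) q = (1 - lr i * pmf P q) * e i q + lr i * pmf P q * Mop p (e i) q" for i q
  proof -
    have B: "Mop p (e i) q = Mop p (EQ p c P lr Q0 i) q - Mop p cs q"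
      unfolding e_def by (rule Mop_diff)
    have A: "e (Suc i) q = EQ p c P lr Q0 i q + lr i * pmf P q * (c q + Mop p (EQ p c P lr Q0 i) q - EQ p c P lr Q0 i q) - cs q"
      by (simp add: e_def EQ_step[OF fin])
    have C: "e i q = EQ p c P lr Q0 i q - cs q" by (simp add: e_def)
    show ?thesis unfolding A B C using fixp[of q] by (simp add: algebra_simps)
  qed
  have bound: "\<forall>q. \<bar>e i q\<bar> \<le> R i * cs q" for i
  proof (induction i)
    case 0
    show ?case
    proof
      fix q
      have "\<bar>e 0 q\<bar> / cs q \<le> r0" unfolding r0_def
        by (rule member_le_sum) (auto intro: divide_nonneg_pos simp: cspos)
      then show "\<bar>e 0 q\<bar> \<le> R 0 * cs q" unfolding R_def using cspos[of q] by (simp add: divide_le_eq)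
    qed
  next
    case (Suc i)
    show ?case
    proof
      fix q
      define l where "l = lr i * pmf P q"
      have l0: "0 \<le> l" unfolding l_def using lr by simp
      have l1: "l \<le> 1" unfolding l_def using lr P1 by (simp add: mult_le_one)
      have h0: "pmin * lr i \<le> pmf P q * lr i" using lr pminle by (simp add: mult_right_mono)
      have h: "(pmin * lr i) * \<delta> \<le> (pmf P q * lr i) * \<delta>"
        by (rule mult_right_mono[OF h0 less_imp_le[OF \<delta>pos]])
      have la: "a * lr i \<le> l * \<delta>" unfolding l_def a_def using h by (simp add: mult_ac)
      have "\<bar>Mop p (e i) q\<bar> \<le> Mop p (\<lambda>r. \<bar>e i r\<bar>) q" by (rule Mop_abs)
      also have "\<dots> \<le> Mop p (\<lambda>r. R i * cs r) q" using Suc.IH by (intro Mop_mono) auto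
      also have "\<dots> = R i * (cs q - c q)" using fixp[of q] by (simp add: Mop_scale)
      also have "\<dots> \<le> R i * ((1 - \<delta>) * cs q)" using \<delta>c[of q] Rnn[of i]
        by (intro mult_left_mono) (auto simp: algebra_simps)
      finally have hM: "\<bar>Mop p (e i) q\<bar> \<le> R i * ((1 - \<delta>) * cs q)" .
      have "\<bar>e (Suc i) q\<bar> \<le> (1 - l) * \<bar>e i q\<bar> + l * \<bar>Mop p (e i) q\<bar>"
        unfolding estep l_def[symmetric] using l0 l1
        by (metis abs_mult abs_of_nonneg abs_triangle_ineq diff_ge_0_iff_ge)
      also have "\<dots> \<le> (1 - l) * (R i * cs q) + l * (R i * ((1 - \<delta>) * cs q))"
        using l0 l1 Suc.IH hM by (intro add_mono mult_left_mono) auto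
      also have "\<dots> = R i * cs q * (1 - l * \<delta>)" by (simp add: algebra_simps)
      also have "\<dots> \<le> R i * cs q * (1 - a * lr i)"
        using la Rnn[of i] cspos[of q] by (intro mult_left_mono) auto
      also have "\<dots> = R (Suc i) * cs q" unfolding R_def by (simp add: algebra_simps)
      finally show "\<bar>e (Suc i) q\<bar> \<le> R (Suc i) * cs q" .
    qed
  qed
  have Rlim: "R \<longlonglongrightarrow> 0"
  proof (rule tendsto_sandwich[of "\<lambda>_. 0" _ _ "\<lambda>i. r0 * exp (- (a * (\<Sum>k<i. lr k)))"])
    show "\<forall>\<^sub>F n in sequentially. 0 \<le> R n" using Rnn by simp
    show "\<forall>\<^sub>F n in sequentially. R n \<le> r0 * exp (- (a * (\<Sum>k<n. lr k)))"
      unfolding R_def using prod_exp_bound[OF alr] r0nn by (simp add: mult_left_mono)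
    show "(\<lambda>_. 0) \<longlonglongrightarrow> (0::real)" by simp
    have "(\<lambda>n. exp (- (a * (\<Sum>k<n. lr k)))) \<longlonglongrightarrow> 0"
      using exp_neg_to_zero[OF apos partial_sums_at_top] lr ns by simp
    then show "(\<lambda>i. r0 * exp (- (a * (\<Sum>k<i. lr k)))) \<longlonglongrightarrow> 0"
      using tendsto_mult_right_zero by blast
  qed
  show ?thesis
  proof
    fix q
    have lim: "(\<lambda>i. R i * cs q) \<longlonglongrightarrow> 0" using tendsto_mult_left_zero[OF Rlim] .
    have ev: "\<forall>\<^sub>F i in sequentially. norm (e i q) \<le> R i * cs q" using bound by simp
    have "(\<lambda>i. e i q) \<longlonglongrightarrow> 0" by (rule Lim_null_comparison[OF ev lim])
    then have "(\<lambda>i. e i q + cs q) \<longlonglongrightarrow> 0 + cs q" by (rule tendsto_add[OF _ tendsto_const])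
    moreover have "(\<lambda>i. e i q + cs q) = (\<lambda>i. EQ p c P lr Q0 i q)" by (simp add: e_def)
    ultimately show "(\<lambda>i. EQ p c P lr Q0 i q) \<longlonglongrightarrow> enn2real (cstar p c q)"
      by (simp add: cs_def)
  qed
qed

end
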